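(* Let $\pi_3=2\int_0^1\frac{\mathrm{d}t}{\sqrt{1-t^6}}$ and let $\mathrm{sleaf}_3:\mathbb{R}\to\mathbb{R}$ be the leaf function of basis $3$. For every integer $m$: (i) if $\frac{\pi_3}{2}(4m-1)\le l\le\frac{\pi_3}{2}(4m+1)$, then $\mathrm{sleaf}_3(2l)=\dfrac{2\,\mathrm{sleaf}_3(l)\sqrt{1-(\mathrm{sleaf}_3(l))^6}}{\sqrt{1+8(\mathrm{sleaf}_3(l))^6}}$; (ii) if $\frac{\pi_3}{2}(4m+1)\le l\le\frac{\pi_3}{2}(4m+3)$, then $\mathrm{sleaf}_3(2l)=-\dfrac{2\,\mathrm{sleaf}_3(l)\sqrt{1-(\mathrm{sleaf}_3(l))^6}}{\sqrt{1+8(\mathrm{sleaf}_3(l))^6}}$.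
   Context: For a natural number $n$, the leaf function $\mathrm{sleaf}_n:\mathbb{R}\to\mathbb{R}$ is the solution of $\frac{\mathrm{d}^2r}{\mathrm{d}l^2}=-n\,r^{2n-1}$ with $r(0)=0$, $r'(0)=1$; it is periodic with period $2\pi_n$, where $\pi_n=2\int_0^1\frac{\mathrm{d}t}{\sqrt{1-t^{2n}}}$, and on $[-\pi_n/2,\pi_n/2]$ it is the inverse of $r\mapsto\int_0^r\frac{\mathrm{d}t}{\sqrt{1-t^{2n}}}$. *)

theory Defs
  imports "HOL-Analysis.Analysis"
begin

text \<open>pi_n = 2 * int_0^1 dt / sqrt(1 - t^(2n)) (Henstock-Kurzweil integral; the
  integrand is absolutely integrable, so this is the improper integral).\<close>
definition leaf_pi :: "nat \<Rightarrow> real" where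
  "leaf_pi n = 2 * integral {0..1} (\<lambda>t. 1 / sqrt (1 - t ^ (2 * n)))"

definition sleaf :: "nat \<Rightarrow> real \<Rightarrow> real" where
  "sleaf n = (THE r. \<exists>r'. r 0 = 0 \<and> r' 0 = 1 \<and>
     (\<forall>x. (r has_real_derivative r' x) (at x)) \<and>
     (\<forall>x. (r' has_real_derivative (- real n * r x ^ (2 * n - 1))) (at x)))"

end

theory Submission
  imports Defs
begin

lemma energy3:
  fixes r r' :: "real \<Rightarrow> real"
  assumes "r 0 = 0" "r' 0 = 1" "\<forall>x. (r has_real_derivative r' x) (at x)"
    "\<forall>x. (r' has_real_derivative (- 3 * r x ^ 5)) (at x)"
  shows "r' x ^ 2 + r x ^ 6 = 1"
proof -
  have "\<forall>x. ((\<lambda>x. r' x ^ 2 + r x ^ 6) has_real_derivative 0) (at x)"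
  proof
    fix x
    have "((\<lambda>x. r' x ^ 2 + r x ^ 6) has_real_derivative
       (of_nat 2 * r' x ^ 1 * (- 3 * r x ^ 5) + of_nat 6 * r x ^ 5 * r' x)) (at x)"
      using assms(3,4) by (auto intro!: derivative_eq_intros)
    then show "((\<lambda>x. r' x ^ 2 + r x ^ 6) has_real_derivative 0) (at x)" by simp
  qed
  from DERIV_isconst_all[OF this, of x 0] show ?thesis using assms(1,2) by simp
qed

lemma bound_from_energy:
  fixes a b :: real assumes "a ^ 2 + b ^ 6 = 1" shows "\<bar>b\<bar> \<le> 1"
proof (rule ccontr)
  assume "\<not> \<bar>b\<bar> \<le> 1"
  then have "1 < \<bar>b\<bar>" by simp
  then have "1 < \<bar>b\<bar> ^ 6" by (intro one_less_power) auto
  moreover have "\<bar>b\<bar> ^ 6 = b ^ 6" by (simp add: power_abs[symmetric] )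
  moreover have "0 \<le> a ^ 2" by simp
  ultimately show False using assms by linarith
qed

lemma pow5_lip:
  fixes x y :: real assumes "\<bar>x\<bar> \<le> 1" "\<bar>y\<bar> \<le> 1"
  shows "\<bar>x ^ 5 - y ^ 5\<bar> \<le> 5 * \<bar>x - y\<bar>"
proof -
  have e: "x ^ 5 - y ^ 5 = (x - y) * (x^4 + x^3*y + x^2*y^2 + x*y^3 + y^4)"
    by (simp add: algebra_simps power_def)
  have b: "\<And>i j. \<bar>x ^ i * y ^ j\<bar> \<le> 1"
    using assms by (simp add: abs_mult power_abs power_le_one mult_le_one)
  have "\<bar>x^4 + x^3*y + x^2*y^2 + x*y^3 + y^4\<bar> \<le> 5"
  proof -
    have "\<bar>x^4 + x^3*y + x^2*y^2 + x*y^3 + y^4\<bar> \<le> \<bar>x^4 * y^0\<bar> + \<bar>x^3*y^1\<bar> + \<bar>x^2*y^2\<bar> + \<bar>x^1*y^3\<bar> + \<bar>x^0 * y^4\<bar>"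
      by (simp only: power_0 power_one_right mult_1_right mult_1_left)
    also have "\<dots> \<le> 5" using b[of 4 0] b[of 3 1] b[of 2 2] b[of 1 3] b[of 0 4] by linarith
    finally show ?thesis .
  qed
  then show ?thesis unfolding e abs_mult
    by (metis abs_ge_zero mult.commute mult_right_mono)
qed

lemma uniq3:
  fixes r1 r1' r2 r2' :: "real \<Rightarrow> real"
  assumes "r1 0 = 0" "r1' 0 = 1" "\<forall>x. (r1 has_real_derivative r1' x) (at x)"
    "\<forall>x. (r1' has_real_derivative (- 3 * r1 x ^ 5)) (at x)"
  assumes "r2 0 = 0" "r2' 0 = 1" "\<forall>x. (r2 has_real_derivative r2' x) (at x)"
    "\<forall>x. (r2' has_real_derivative (- 3 * r2 x ^ 5)) (at x)"
  shows "r1 x = r2 x"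
proof -
  define E where "E x = (r1 x - r2 x) ^ 2 + (r1' x - r2' x) ^ 2" for x
  define E' where "E' x = 2 * (r1 x - r2 x) * (r1' x - r2' x) + 2 * (r1' x - r2' x) * (- 3 * r1 x ^ 5 - - 3 * r2 x ^ 5)" for x
  have dE: "(E has_real_derivative E' x) (at x)" for x
  proof -
    have "(E has_real_derivative (of_nat 2 * (r1 x - r2 x) ^ 1 * (r1' x - r2' x) + of_nat 2 * (r1' x - r2' x) ^ 1 * (- 3 * r1 x ^ 5 - - 3 * r2 x ^ 5))) (at x)"
      unfolding E_def using assms(3,4,7,8) by (auto intro!: derivative_eq_intros simp: algebra_simps)
    then show ?thesis unfolding E'_def by (simp add: algebra_simps)
  qed
  have bnd: "\<bar>E' x\<bar> \<le> 16 * E x" for x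
  proof -
    have b1: "\<bar>r1 x\<bar> \<le> 1" using bound_from_energy[OF energy3[OF assms(1-4)]] .
    have b2: "\<bar>r2 x\<bar> \<le> 1" using bound_from_energy[OF energy3[OF assms(5-8)]] .
    define a where "a = r1 x - r2 x"
    define b where "b = r1' x - r2' x"
    have l: "\<bar>r1 x ^ 5 - r2 x ^ 5\<bar> \<le> 5 * \<bar>a\<bar>" using pow5_lip[OF b1 b2] a_def by simp
    have "E' x = 2 * a * b - 6 * b * (r1 x ^ 5 - r2 x ^ 5)" unfolding E'_def a_def b_def by (simp add: algebra_simps)
    then have "\<bar>E' x\<bar> \<le> 2 * \<bar>a\<bar> * \<bar>b\<bar> + 6 * \<bar>b\<bar> * \<bar>r1 x ^ 5 - r2 x ^ 5\<bar>"
      by (simp add: abs_mult abs_triangle_ineq4[THEN order_trans] ) 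
    also have "\<dots> \<le> 2 * \<bar>a\<bar> * \<bar>b\<bar> + 6 * \<bar>b\<bar> * (5 * \<bar>a\<bar>)"
      using mult_left_mono[OF l, of "\<bar>b\<bar>"] by (simp add: algebra_simps)
    also have "\<dots> = 32 * \<bar>a\<bar> * \<bar>b\<bar>" by simp
    also have "\<dots> \<le> 16 * (a^2 + b^2)"
    proof -
      have "0 \<le> (\<bar>a\<bar> - \<bar>b\<bar>)^2" by simp
      then show ?thesis by (simp add: power2_eq_square algebra_simps)
    qed
    finally show ?thesis unfolding E_def a_def b_def by simp
  qed
  have E0: "E 0 = 0" unfolding E_def using assms by simp
  have Enn: "E x \<ge> 0" for x unfolding E_def by simp
  have "E x = 0"
  proof (cases "x \<ge> 0")
    case True
    define F where "F y = E y * exp (- 16 * y)" for y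
    have "F x \<le> F 0"
    proof (rule deriv_nonpos_imp_antimono[of 0 x F "\<lambda>y. (E' y - 16 * E y) * exp (-16 * y)"])
      fix y show "(F has_real_derivative (E' y - 16 * E y) * exp (-16 * y)) (at y)"
        unfolding F_def using dE
        by (auto intro!: derivative_eq_intros simp: algebra_simps)
      show "(E' y - 16 * E y) * exp (-16 * y) \<le> 0"
        using bnd[of y] by (simp add: mult_nonneg_nonpos2 mult_nonpos_nonneg)
    qed (use True in auto)
    then have "E x * exp (-16 * x) \<le> 0" using E0 unfolding F_def by simp
    then have "E x \<le> 0" by (simp add: mult_le_0_iff)
    then show ?thesis using Enn[of x] by simp
  next
    case False
    define F where "F y = E y * exp (16 * y)" for y
    have "- F 0 \<le> - F x"
    proof (rule deriv_nonpos_imp_antimono[of x 0 "\<lambda>y. - F y" "\<lambda>y. - ((E' y + 16 * E y) * exp (16 * y))"])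
      fix y show "((\<lambda>y. - F y) has_real_derivative - ((E' y + 16 * E y) * exp (16 * y))) (at y)"
        unfolding F_def using dE
        by (auto intro!: derivative_eq_intros simp: algebra_simps)
      have "E' y + 16 * E y \<ge> 0" using bnd[of y] by simp
      then show "- ((E' y + 16 * E y) * exp (16 * y)) \<le> 0"
        by simp
    qed (use False in auto)
    then have "E x * exp (16 * x) \<le> 0" using E0 unfolding F_def by simp
    then have "E x \<le> 0" by (simp add: mult_le_0_iff)
    then show ?thesis using Enn[of x] by simp
  qed
  then show ?thesis unfolding E_def by (simp add: add_nonneg_eq_0_iff)
qed

definition qf :: "real \<Rightarrow> real" where "qf x = sqrt (1 + sin x ^ 2 + sin x ^ 4)"
definition gf :: "real \<Rightarrow> real" where "gf x = 1 / qf x"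
definition TT :: "real \<Rightarrow> real" where "TT x = integral {0..x} gf - integral {x..0} gf"

lemma qf_ge1: "qf x \<ge> 1"
  unfolding qf_def by simp

lemma qf_pos: "qf x > 0" using qf_ge1[of x] by simp

lemma qf_le2: "qf x \<le> 2"
proof -
  have "sin x ^ 2 \<le> 1" using sin_cos_squared_add[of x] by (smt (verit) zero_le_power2)
  moreover have "sin x ^ 4 = sin x ^ 2 * sin x ^ 2" by algebra
  moreover have "sin x ^ 2 * sin x ^ 2 \<le> 1" using calculation(1) by (intro mult_le_one) auto
  ultimately have "1 + sin x ^ 2 + sin x ^ 4 \<le> 4" by linarith
  then have "1 + sin x ^ 2 + sin x ^ 4 \<le> 2 ^ 2" by simp
  then have "sqrt (1 + sin x ^ 2 + sin x ^ 4) \<le> sqrt (2 ^ 2)" by (rule real_sqrt_le_mono)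
  then show ?thesis unfolding qf_def by simp
qed

lemma gf_pos: "gf x > 0" unfolding gf_def using qf_pos[of x] by simp
lemma gf_ge: "gf x \<ge> 1/2" unfolding gf_def using qf_le2[of x] qf_pos[of x] by (simp add: field_simps)

lemma qf_sq: "qf x ^ 2 = 1 + sin x ^ 2 + sin x ^ 4"
  unfolding qf_def by (simp add: add_nonneg_nonneg)

lemma cont_qf: "continuous_on S qf"
  unfolding qf_def by (intro continuous_intros)

lemma cont_gf: "continuous_on S gf"
  unfolding gf_def using qf_pos by (intro continuous_intros cont_qf) (auto simp: less_imp_neq[symmetric])

lemma deriv_qf: "(qf has_real_derivative (sin x * cos x + 2 * sin x ^ 3 * cos x) / qf x) (at x)"
proof -
  have p: "1 + sin x ^ 2 + sin x ^ 4 > 0" by (simp add: add_pos_nonneg)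
  have dh: "((\<lambda>x. 1 + sin x ^ 2 + sin x ^ 4) has_real_derivative 2 * sin x * cos x + 4 * sin x ^ 3 * cos x) (at x)"
    by (auto intro!: derivative_eq_intros simp: algebra_simps)
  have A: "(qf has_real_derivative inverse (sqrt (1 + sin x ^ 2 + sin x ^ 4)) / 2 * (2 * sin x * cos x + 4 * sin x ^ 3 * cos x)) (at x)"
    unfolding qf_def[abs_def] by (rule DERIV_chain2[OF DERIV_real_sqrt[OF p] dh])
  moreover have E: "inverse (sqrt (1 + sin x ^ 2 + sin x ^ 4)) / 2 * (2 * sin x * cos x + 4 * sin x ^ 3 * cos x)
     = (sin x * cos x + 2 * sin x ^ 3 * cos x) / qf x"
    using p unfolding qf_def by (simp add: field_simps)
  ultimately show ?thesis by (simp only:)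
qed

lemma TT_local:
  assumes "a \<le> 0" "a \<le> y"
  shows "TT y = integral {a..y} gf - integral {a..0} gf"
proof (cases "y \<ge> 0")
  case True
  have "integral {a..0} gf + integral {0..y} gf = integral {a..y} gf"
    using assms True by (intro Henstock_Kurzweil_Integration.integral_combine) (auto intro!: integrable_continuous_real cont_gf)
  moreover have "integral {y..0} gf = 0"
    using True by (cases "y = 0") auto
  ultimately show ?thesis unfolding TT_def by simp
next
  case False
  have "integral {a..y} gf + integral {y..0} gf = integral {a..0} gf"
    using assms False by (intro Henstock_Kurzweil_Integration.integral_combine) (auto intro!: integrable_continuous_real cont_gf)
  moreover have "integral {0..y} gf = 0"
    using False by auto
  ultimately show ?thesis unfolding TT_def by simp
qed

lemma deriv_TT: "(TT has_real_derivative gf x) (at x)"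
proof -
  define a where "a = min 0 x - 1"
  define b where "b = x + 1"
  have "((\<lambda>y. integral {a..y} gf) has_real_derivative gf x) (at x within {a..b})"
    by (rule integral_has_real_derivative) (auto simp: a_def b_def intro: cont_gf)
  then have "((\<lambda>y. integral {a..y} gf) has_real_derivative gf x) (at x)"
    by (simp add: at_within_Icc_at a_def b_def)
  then have "((\<lambda>y. integral {a..y} gf - integral {a..0} gf) has_real_derivative gf x - 0) (at x)"
    by (intro derivative_intros)
  moreover have "\<And>y. y \<in> {a<..} \<Longrightarrow> integral {a..y} gf - integral {a..0} gf = TT y"
    by (rule TT_local[symmetric]) (auto simp: a_def)
  ultimately show ?thesis
    using has_field_derivative_transform_within_open[where S="{a<..}"] by (auto simp: a_def)
qed

lemma TT0: "TT 0 = 0" unfolding TT_def by simp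

lemma TT_mono: "x < y \<Longrightarrow> TT x < TT y"
  by (rule DERIV_pos_imp_increasing[of x y TT]) (auto intro: deriv_TT gf_pos)

lemma TT_le_iff: "TT x \<le> TT y \<longleftrightarrow> x \<le> y"
proof
  assume "TT x \<le> TT y" then show "x \<le> y" using TT_mono[of y x] by linarith
next
  assume "x \<le> y" then show "TT x \<le> TT y" using TT_mono[of x y] by (cases "x = y") auto
qed

lemma TT_inj: "TT x = TT y \<longleftrightarrow> x = y"
  using TT_le_iff[of x y] TT_le_iff[of y x] by auto

lemma TT_lower: assumes "x \<ge> 0" shows "TT x \<ge> x / 2"
proof -
  have "TT 0 - 0/2 \<le> TT x - x / 2"
    by (rule DERIV_nonneg_imp_nondecreasing[of 0 x])
       (use assms gf_ge in \<open>auto intro!: exI derivative_eq_intros deriv_TT\<close>)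
  then show ?thesis using TT0 by simp
qed

lemma TT_upper: assumes "x \<le> 0" shows "TT x \<le> x / 2"
proof -
  have "TT x - x/2 \<le> TT 0 - 0 / 2"
    by (rule DERIV_nonneg_imp_nondecreasing[of x 0])
       (use assms gf_ge in \<open>auto intro!: exI derivative_eq_intros deriv_TT\<close>)
  then show ?thesis using TT0 by simp
qed

lemma TT_surj: "\<exists>x. TT x = t"
proof -
  have c1: "TT (- 2 * \<bar>t\<bar>) \<le> t" using TT_upper[of "- 2 * \<bar>t\<bar>"] by simp
  have c2: "t \<le> TT (2 * \<bar>t\<bar>)" using TT_lower[of "2 * \<bar>t\<bar>"] by simp
  show ?thesis
  proof -
    have c: "\<forall>x. - 2 * \<bar>t\<bar> \<le> x \<and> x \<le> 2 * \<bar>t\<bar> \<longrightarrow> isCont TT x"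
      using deriv_TT DERIV_isCont by blast
    from IVT[OF c1 c2 _ c] show ?thesis by auto
  qed
qed

definition th :: "real \<Rightarrow> real" where "th t = (THE x. TT x = t)"

lemma TT_th: "TT (th t) = t"
proof -
  obtain x where x: "TT x = t" using TT_surj by blast
  have "\<exists>!x. TT x = t"
    by (rule ex1I[of _ x]) (use x TT_inj in auto)
  then show ?thesis unfolding th_def by (rule theI')
qed

lemma th_TT: "th (TT x) = x"
  using TT_th[of "TT x"] TT_inj[of "th (TT x)" x] by simp

lemma th_le_iff: "th s \<le> th t \<longleftrightarrow> s \<le> t"
  by (metis TT_le_iff TT_th)

lemma isCont_th: "isCont th t"
proof -
  have "isCont th (TT (th t))"
    by (rule isCont_inverse_function2[of "th t - 1" _ "th t + 1"])
       (auto simp: th_TT intro: DERIV_isCont deriv_TT)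
  then show ?thesis by (simp add: TT_th)
qed

lemma deriv_th: "(th has_real_derivative qf (th t)) (at t)"
proof -
  have "(th has_real_derivative inverse (gf (th t))) (at t)"
    by (rule DERIV_inverse_function[where f=TT and a="t - 1" and b="t + 1"])
       (auto simp: TT_th isCont_th deriv_TT less_imp_neq[OF gf_pos, symmetric])
  then show ?thesis by (simp add: gf_def)
qed

definition R :: "real \<Rightarrow> real" where "R t = sin (th t)"
definition R1 :: "real \<Rightarrow> real" where "R1 t = cos (th t) * qf (th t)"

lemma deriv_R: "(R has_real_derivative R1 x) (at x)"
  unfolding R_def R1_def by (auto intro!: derivative_eq_intros deriv_th)

lemma deriv_R1: "(R1 has_real_derivative (- 3 * R x ^ 5)) (at x)"
proof -
  let ?t = "th x"
  have d1: "((\<lambda>t. cos (th t)) has_real_derivative - sin ?t * qf ?t) (at x)"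
    by (rule DERIV_chain2[OF DERIV_cos deriv_th])
  have d2: "((\<lambda>t. qf (th t)) has_real_derivative (sin ?t * cos ?t + 2 * sin ?t ^ 3 * cos ?t) / qf ?t * qf ?t) (at x)"
    by (rule DERIV_chain2[OF deriv_qf deriv_th])
  have "(R1 has_real_derivative (- sin ?t * qf ?t + cos ?t * ((sin ?t * cos ?t + 2 * sin ?t ^ 3 * cos ?t) / qf ?t)) * qf ?t) (at x)"
    unfolding R1_def using DERIV_mult[OF d1 d2] by (simp add: algebra_simps)
  moreover have "(- sin ?t * qf ?t + cos ?t * ((sin ?t * cos ?t + 2 * sin ?t ^ 3 * cos ?t) / qf ?t)) * qf ?t
     = - sin ?t * qf ?t ^ 2 + cos ?t ^ 2 * (sin ?t + 2 * sin ?t ^ 3)"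
    using qf_pos[of ?t] by (simp add: field_simps power2_eq_square)
  moreover have "\<dots> = - 3 * sin ?t ^ 5"
    unfolding qf_sq cos_squared_eq by (simp add: algebra_simps power_def)
  ultimately show ?thesis by (simp add: R_def)
qed

lemma th0: "th 0 = 0" using th_TT[of 0] TT0 by simp
lemma R0: "R 0 = 0" by (simp add: R_def th0)
lemma R10: "R1 0 = 1" by (simp add: R1_def th0 qf_def)

lemma gf_shift: "gf (x + pi) = gf x" by (simp add: gf_def qf_def)
lemma gf_refl: "gf (pi - x) = gf x" by (simp add: gf_def qf_def)
lemma gf_neg: "gf (- x) = gf x" by (simp add: gf_def qf_def)

lemma TT_shift: "TT (x + pi) = TT x + TT pi"
proof -
  have "\<forall>y. ((\<lambda>y. TT (y + pi) - TT y) has_real_derivative 0) (at y)"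
  proof
    fix y
    have d: "((\<lambda>y. y + pi) has_real_derivative 1) (at y)"
      by (auto intro!: derivative_eq_intros)
    have "((\<lambda>y. TT (y + pi) - TT y) has_real_derivative gf (y + pi) * 1 - gf y) (at y)"
      using DERIV_diff[OF DERIV_chain2[OF deriv_TT d] deriv_TT] by simp
    then show "((\<lambda>y. TT (y + pi) - TT y) has_real_derivative 0) (at y)" by (simp add: gf_shift)
  qed
  from DERIV_isconst_all[OF this, of x 0] show ?thesis by (simp add: TT0)
qed

lemma TT_refl: "TT (pi - x) + TT x = TT pi"
proof -
  have "\<forall>y. ((\<lambda>y. TT (pi - y) + TT y) has_real_derivative 0) (at y)"
  proof
    fix y
    have d: "((\<lambda>y. pi - y) has_real_derivative 0 - 1) (at y)"
      by (auto intro!: derivative_eq_intros)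
    have "((\<lambda>y. TT (pi - y) + TT y) has_real_derivative gf (pi - y) * (0 - 1) + gf y) (at y)"
      using DERIV_add[OF DERIV_chain2[OF deriv_TT d] deriv_TT] by simp
    then show "((\<lambda>y. TT (pi - y) + TT y) has_real_derivative 0) (at y)" by (simp add: gf_refl)
  qed
  from DERIV_isconst_all[OF this, of x 0] show ?thesis by (simp add: TT0)
qed

lemma TT_neg: "TT (- x) = - TT x"
proof -
  have "\<forall>y. ((\<lambda>y. TT (- y) + TT y) has_real_derivative 0) (at y)"
  proof
    fix y
    have d: "((\<lambda>y. - y) has_real_derivative - 1) (at y)"
      by (auto intro!: derivative_eq_intros)
    have "((\<lambda>y. TT (- y) + TT y) has_real_derivative gf (- y) * (- 1) + gf y) (at y)"
      using DERIV_add[OF DERIV_chain2[OF deriv_TT d] deriv_TT] by simp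
    then show "((\<lambda>y. TT (- y) + TT y) has_real_derivative 0) (at y)" by (simp add: gf_neg)
  qed
  from DERIV_isconst_all[OF this, of x 0] show ?thesis by (simp add: TT0)
qed

definition PP :: real where "PP = TT (pi / 2)"

lemma TT_pi: "TT pi = 2 * PP"
  using TT_refl[of "pi/2"] unfolding PP_def by simp

lemma TT_shift_nat: "TT (x + real n * pi) = TT x + real n * (2 * PP)"
proof (induction n)
  case 0 then show ?case by simp
next
  case (Suc n)
  have "TT (x + real (Suc n) * pi) = TT ((x + real n * pi) + pi)" by (simp add: algebra_simps)
  also have "\<dots> = TT x + real n * (2 * PP) + 2 * PP" using Suc TT_shift TT_pi by simp
  finally show ?case by (simp add: algebra_simps)
qed

lemma TT_shift_int: "TT (x + of_int k * pi) = TT x + of_int k * (2 * PP)"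
proof (cases "k \<ge> 0")
  case True
  define n where "n = nat k"
  have "k = int n" using True by (simp add: n_def)
  then show ?thesis using TT_shift_nat[of x n] by simp
next
  case False
  define n where "n = nat (- k)"
  have n: "k = - int n" using False by (simp add: n_def)
  have "TT x = TT ((x + of_int k * pi) + real n * pi)" using n by simp
  also have "\<dots> = TT (x + of_int k * pi) + real n * (2 * PP)" by (rule TT_shift_nat)
  finally show ?thesis using n by simp
qed

lemma cos_shift_int: "cos (y + 2 * pi * of_int m) = cos y"
  by (simp add: cos_add)

lemma int_eq: "integral {0..1} (\<lambda>t::real. 1 / sqrt (1 - t ^ 6)) = PP"
proof -
  have "((\<lambda>t. (1 / sqrt (1 - t\<^sup>2)) *\<^sub>R gf (arcsin t)) has_integral
          (integral {arcsin 0..arcsin 1} gf - integral {arcsin 1..arcsin 0} gf)) {0..1}"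
  proof (rule has_integral_substitution_general[where s="{1}" and c=0 and d="pi/2"])
    show "arcsin ` {0..1} \<subseteq> {0..pi/2}"
      using arcsin_le_mono[of _ 1] arcsin_le_mono[of 0] by fastforce
    show "continuous_on {0..pi / 2} gf" by (rule cont_gf)
    show "continuous_on {0..1} arcsin" by (intro continuous_intros) auto
    fix x :: real assume "x \<in> {0..1} - {1}"
    then have "-1 < x" "x < 1" by auto
    from DERIV_arcsin[OF this] show "(arcsin has_real_derivative 1 / sqrt (1 - x\<^sup>2)) (at x within {0..1})"
      by (simp add: has_field_derivative_at_within divide_inverse)
  qed auto
  moreover have "integral {arcsin 0..arcsin 1} gf - integral {arcsin 1..arcsin 0} gf = PP"
    unfolding PP_def TT_def by simp
  moreover have "(1 / sqrt (1 - t\<^sup>2)) *\<^sub>R gf (arcsin t) = 1 / sqrt (1 - t ^ 6)" if "t \<in> {0..1}" for t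
  proof -
    have t: "0 \<le> t" "t \<le> 1" using that by auto
    have "gf (arcsin t) = 1 / sqrt (1 + t^2 + t^4)" using t by (simp add: gf_def qf_def)
    moreover have "1 - t ^ 6 = (1 - t^2) * (1 + t^2 + t^4)" by algebra
    ultimately show ?thesis by (simp add: real_sqrt_mult)
  qed
  ultimately have "((\<lambda>t::real. 1 / sqrt (1 - t ^ 6)) has_integral PP) {0..1}"
    using has_integral_cong by (metis (no_types, lifting))
  then show ?thesis by (rule integral_unique)
qed

lemma id1:
  fixes u v D :: real
  assumes "D > 0" "D^2 = 1 + 8*u^6" "v^2 = 1 - u^6"
  shows "(2 * (v / 2 * v + u * (- 3 * u ^ 5 / 2)) * D - 2 * (u * v) * (inverse D / 2 * (8 * (6 * u ^ 5 * (v / 2))))) / (D * D)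
         = (1 - 20*u^6 - 8*u^12) / D^3"
proof -
  have "(2 * (v / 2 * v + u * (- 3 * u ^ 5 / 2)) * D - 2 * (u * v) * (inverse D / 2 * (8 * (6 * u ^ 5 * (v / 2))))) / (D * D)
      = ((v ^ 2 - 3 * u ^ 6) * D ^ 2 - 24 * u ^ 6 * v ^ 2) / D ^ 3"
    using assms(1) by (simp add: field_simps power2_eq_square power3_eq_cube) algebra
  also have "(v ^ 2 - 3 * u ^ 6) * D ^ 2 - 24 * u ^ 6 * v ^ 2 = 1 - 20 * u ^ 6 - 8 * u ^ 12"
    using assms(2,3) by algebra
  finally show ?thesis .
qed

lemma id2:
  fixes u v D :: real
  assumes "D > 0" "D^2 = 1 + 8*u^6" "v^2 = 1 - u^6"
  shows "(((- 120 * u^5 - 96 * u^11) * (v / 2)) * D^3 - (1 - 20*u^6 - 8*u^12) * (3 * D^2 * (inverse D / 2 * (8 * (6 * u ^ 5 * (v / 2)))))) / (D^3 * D^3)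
         = - 3 * (2 * (u * v) / D) ^ 5"
proof -
  have "(((- 120 * u^5 - 96 * u^11) * (v / 2)) * D^3 - (1 - 20*u^6 - 8*u^12) * (3 * D^2 * (inverse D / 2 * (8 * (6 * u ^ 5 * (v / 2)))))) / (D^3 * D^3)
      = u^5 * v * ((- 60 - 48 * u^6) * D^2 - 36 * (1 - 20*u^6 - 8*u^12)) / D^5"
    using assms(1) by (simp add: field_simps power2_eq_square power3_eq_cube) algebra
  also have "u^5 * v * ((- 60 - 48 * u^6) * D^2 - 36 * (1 - 20*u^6 - 8*u^12)) = - 96 * u^5 * v^5"
    using assms(2,3) by algebra
  also have "- 96 * u^5 * v^5 / D^5 = - 3 * (2 * (u * v) / D) ^ 5"
    by (simp add: power_divide power_mult_distrib)
  finally show ?thesis .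
qed

locale solpair =
  fixes u v :: "real \<Rightarrow> real"
  assumes du: "\<And>x. (u has_real_derivative v x / 2) (at x)"
    and dv: "\<And>x. (v has_real_derivative - 3 * u x ^ 5 / 2) (at x)"
    and en: "\<And>x. v x ^ 2 = 1 - u x ^ 6"
begin

definition DD where "DD x = sqrt (1 + 8 * u x ^ 6)"
definition Y where "Y x = 2 * (u x * v x) / DD x"
definition Y1 where "Y1 x = (1 - 20 * u x ^ 6 - 8 * u x ^ 12) / DD x ^ 3"

lemma wpos: "1 + 8 * u x ^ 6 > 0"
proof -
  have "u x ^ 6 = (u x ^ 3)^2" by algebra
  then have "u x ^ 6 \<ge> 0" by simp
  then show ?thesis by linarith
qed

lemma DD_pos: "DD x > 0" unfolding DD_def using wpos by simp
lemma DD_sq: "DD x ^ 2 = 1 + 8 * u x ^ 6" unfolding DD_def using wpos[of x] by simp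

lemma dDD: "(DD has_real_derivative inverse (DD x) / 2 * (8 * (6 * u x ^ 5 * (v x / 2)))) (at x)"
proof -
  have dw: "((\<lambda>x. 1 + 8 * u x ^ 6) has_real_derivative 8 * (6 * u x ^ 5 * (v x / 2))) (at x)"
    using du by (auto intro!: derivative_eq_intros)
  show ?thesis
    using DERIV_chain2[OF DERIV_real_sqrt[OF wpos[of x]] dw] unfolding DD_def[abs_def] by simp
qed

lemma dY: "(Y has_real_derivative Y1 x) (at x)"
proof -
  have dP: "((\<lambda>x. 2 * (u x * v x)) has_real_derivative 2 * (v x / 2 * v x + u x * (- 3 * u x ^ 5 / 2))) (at x)"
  proof -
    have "((\<lambda>x. u x * v x) has_real_derivative v x / 2 * v x + u x * (- 3 * u x ^ 5 / 2)) (at x)"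
      using DERIV_mult[OF du dv] by (simp add: algebra_simps)
    from DERIV_cmult[OF this, of 2] show ?thesis by simp
  qed
  have "(Y has_real_derivative (2 * (v x / 2 * v x + u x * (- 3 * u x ^ 5 / 2)) * DD x - 2 * (u x * v x) * (inverse (DD x) / 2 * (8 * (6 * u x ^ 5 * (v x / 2))))) / (DD x * DD x)) (at x)"
    unfolding Y_def[abs_def] by (rule DERIV_divide[OF dP dDD]) (use DD_pos[of x] in simp)
  then show ?thesis unfolding Y1_def using id1[OF DD_pos DD_sq en] by simp
qed

lemma dY1: "(Y1 has_real_derivative - 3 * Y x ^ 5) (at x)"
proof -
  have dN: "((\<lambda>x. 1 - 20 * u x ^ 6 - 8 * u x ^ 12) has_real_derivative (- 120 * u x^5 - 96 * u x^11) * (v x / 2)) (at x)"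
    using du by (auto intro!: derivative_eq_intros simp: algebra_simps)
  have dD3: "((\<lambda>x. DD x ^ 3) has_real_derivative 3 * DD x ^ 2 * (inverse (DD x) / 2 * (8 * (6 * u x ^ 5 * (v x / 2))))) (at x)"
    using DERIV_chain2[OF DERIV_pow dDD, of 3] by (simp add: algebra_simps)
  have "(Y1 has_real_derivative (((- 120 * u x^5 - 96 * u x^11) * (v x / 2)) * DD x^3 - (1 - 20*u x^6 - 8*u x^12) * (3 * DD x^2 * (inverse (DD x) / 2 * (8 * (6 * u x ^ 5 * (v x / 2)))))) / (DD x^3 * DD x^3)) (at x)"
    unfolding Y1_def[abs_def] by (rule DERIV_divide[OF dN dD3]) (use DD_pos[of x] in simp)
  then show ?thesis unfolding Y_def using id2[OF DD_pos DD_sq en] by simp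
qed

end

lemma energyR: "R1 x ^ 2 = 1 - R x ^ 6"
  using energy3[of R R1 x] R0 R10 deriv_R deriv_R1 by simp

interpretation half: solpair "\<lambda>x. R (x / 2)" "\<lambda>x. R1 (x / 2)"
proof
  fix x :: real
  have d: "((\<lambda>x. x / 2) has_real_derivative 1 / 2) (at x)"
    by (auto intro!: derivative_eq_intros)
  show "((\<lambda>x. R (x / 2)) has_real_derivative R1 (x / 2) / 2) (at x)"
    using DERIV_chain2[OF deriv_R d] by simp
  show "((\<lambda>x. R1 (x / 2)) has_real_derivative - 3 * R (x / 2) ^ 5 / 2) (at x)"
    using DERIV_chain2[OF deriv_R1 d] by simp
  show "R1 (x / 2) ^ 2 = 1 - R (x / 2) ^ 6" by (rule energyR)
qed

lemma double: "R (2 * l) = 2 * R l * R1 l / sqrt (1 + 8 * R l ^ 6)"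
proof -
  have a1: "half.Y 0 = 0" by (simp add: half.Y_def R0)
  have a2: "half.Y1 0 = 1" by (simp add: half.Y1_def half.DD_def R0)
  have a3: "\<forall>x. (half.Y has_real_derivative half.Y1 x) (at x)" using half.dY by blast
  have a4: "\<forall>x. (half.Y1 has_real_derivative - 3 * half.Y x ^ 5) (at x)" using half.dY1 by blast
  have b3: "\<forall>x. (R has_real_derivative R1 x) (at x)" using deriv_R by blast
  have b4: "\<forall>x. (R1 has_real_derivative - 3 * R x ^ 5) (at x)" using deriv_R1 by blast
  have "half.Y x = R x" for x by (rule uniq3[OF a1 a2 a3 a4 R0 R10 b3 b4])
  from this[of "2 * l"] show ?thesis by (simp add: half.Y_def half.DD_def mult.assoc)
qed

lemma sleaf_eq: "sleaf 3 = R"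
  unfolding sleaf_def
proof (rule the_equality)
  show "\<exists>r'. R 0 = 0 \<and> r' 0 = 1 \<and> (\<forall>x. (R has_real_derivative r' x) (at x)) \<and>
       (\<forall>x. (r' has_real_derivative - real 3 * R x ^ (2 * 3 - 1)) (at x))"
  proof -
    have "\<forall>x. (R1 has_real_derivative - real 3 * R x ^ (2 * 3 - 1)) (at x)" using deriv_R1 by simp
    then show ?thesis using R0 R10 deriv_R by blast
  qed
next
  fix r assume "\<exists>r'. r 0 = 0 \<and> r' 0 = 1 \<and> (\<forall>x. (r has_real_derivative r' x) (at x)) \<and>
       (\<forall>x. (r' has_real_derivative - real 3 * r x ^ (2 * 3 - 1)) (at x))"
  then obtain r' where h: "r 0 = 0" "r' 0 = 1" "\<forall>x. (r has_real_derivative r' x) (at x)"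
    "\<forall>x. (r' has_real_derivative - 3 * r x ^ 5) (at x)" by auto
  show "r = R"
  proof
    have b3: "\<forall>x. (R has_real_derivative R1 x) (at x)" using deriv_R by blast
    have b4: "\<forall>x. (R1 has_real_derivative - 3 * R x ^ 5) (at x)" using deriv_R1 by blast
    fix x show "r x = R x" by (rule uniq3[OF h R0 R10 b3 b4])
  qed
qed

lemma leaf_pi3: "leaf_pi 3 / 2 = PP"
  unfolding leaf_pi_def using int_eq by simp

lemma one_minus_R6: "1 - R l ^ 6 = (cos (th l) * qf (th l)) ^ 2"
proof -
  have "(cos (th l) * qf (th l)) ^ 2 = cos (th l) ^ 2 * qf (th l) ^ 2" by (simp add: power_mult_distrib)
  also have "\<dots> = (1 - sin (th l) ^ 2) * (1 + sin (th l) ^ 2 + sin (th l) ^ 4)"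
    by (simp add: qf_sq cos_squared_eq)
  also have "\<dots> = 1 - sin (th l) ^ 6" by algebra
  finally show ?thesis by (simp add: R_def)
qed

lemma sqrt_R6: "sqrt (1 - R l ^ 6) = \<bar>cos (th l)\<bar> * qf (th l)"
  unfolding one_minus_R6 using qf_pos[of "th l"] by (simp add: abs_mult)

lemma TT_at: "TT (of_int j * (pi / 2) + 2 * pi * of_int m) = (of_int j * PP) + 4 * of_int m * PP"
  if "j = -1 \<or> j = 1 \<or> j = 3" for j m :: int
proof -
  have "TT (of_int j * (pi / 2) + 2 * pi * of_int m) = TT (of_int j * (pi / 2) + of_int (2 * m) * pi)"
    by (simp add: algebra_simps)
  also have "\<dots> = TT (of_int j * (pi / 2)) + of_int (2 * m) * (2 * PP)" by (rule TT_shift_int)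
  also have "TT (of_int j * (pi / 2)) = of_int j * PP"
    using that
  proof (elim disjE)
    assume "j = -1" then show ?thesis using TT_neg[of "pi/2"] by (simp add: PP_def)
  next
    assume "j = 1" then show ?thesis by (simp add: PP_def)
  next
    assume "j = 3"
    have "TT (3 * (pi / 2)) = TT (pi / 2 + pi)" by (simp add: algebra_simps)
    also have "\<dots> = 3 * PP" using TT_shift[of "pi/2"] TT_pi by (simp add: PP_def)
    finally show ?thesis using \<open>j = 3\<close> by simp
  qed
  finally show ?thesis by (simp add: algebra_simps)
qed

lemma th_ge: "th l \<ge> y" if "TT y \<le> l" for y l
  using that TT_le_iff[of y "th l"] TT_th[of l] by simp
lemma th_le: "th l \<le> y" if "l \<le> TT y" for y l
  using that TT_le_iff[of "th l" y] TT_th[of l] by simp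

theorem mainTheorem6:
  fixes m :: int and l :: real
  shows "(leaf_pi 3 / 2 * (4 * of_int m - 1) \<le> l \<and> l \<le> leaf_pi 3 / 2 * (4 * of_int m + 1) \<longrightarrow>
           sleaf 3 (2 * l) = 2 * sleaf 3 l * sqrt (1 - (sleaf 3 l) ^ 6) / sqrt (1 + 8 * (sleaf 3 l) ^ 6))
       \<and> (leaf_pi 3 / 2 * (4 * of_int m + 1) \<le> l \<and> l \<le> leaf_pi 3 / 2 * (4 * of_int m + 3) \<longrightarrow>
           sleaf 3 (2 * l) = - (2 * sleaf 3 l * sqrt (1 - (sleaf 3 l) ^ 6) / sqrt (1 + 8 * (sleaf 3 l) ^ 6)))"
proof (unfold sleaf_eq leaf_pi3, intro conjI impI)
  have Tm1: "TT (of_int (-1) * (pi / 2) + 2 * pi * of_int m) = PP * (4 * of_int m - 1)"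
    using TT_at[of "-1" m] by (simp add: algebra_simps)
  have T1: "TT (of_int 1 * (pi / 2) + 2 * pi * of_int m) = PP * (4 * of_int m + 1)"
    using TT_at[of 1 m] by (simp add: algebra_simps)
  have T3: "TT (of_int 3 * (pi / 2) + 2 * pi * of_int m) = PP * (4 * of_int m + 3)"
    using TT_at[of 3 m] by (simp add: algebra_simps)
  {
    assume a: "PP * (4 * of_int m - 1) \<le> l \<and> l \<le> PP * (4 * of_int m + 1)"
    define y where "y = th l - 2 * pi * of_int m"
    have "- (pi / 2) \<le> y" "y \<le> pi / 2"
      using th_ge[of "of_int (-1) * (pi / 2) + 2 * pi * of_int m" l] th_le[of l "of_int 1 * (pi / 2) + 2 * pi * of_int m"]
        a Tm1 T1 unfolding y_def by auto
    then have "cos y \<ge> 0" by (rule cos_ge_zero)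
    moreover have "cos (th l) = cos y" unfolding y_def by (simp add: cos_diff)
    ultimately have "R1 l = sqrt (1 - R l ^ 6)" by (simp add: sqrt_R6 R1_def)
    then show "R (2 * l) = 2 * R l * sqrt (1 - R l ^ 6) / sqrt (1 + 8 * R l ^ 6)"
      by (simp add: double)
  next
    assume a: "PP * (4 * of_int m + 1) \<le> l \<and> l \<le> PP * (4 * of_int m + 3)"
    define y where "y = th l - 2 * pi * of_int m - pi"
    have "- (pi / 2) \<le> y" "y \<le> pi / 2"
      using th_ge[of "of_int 1 * (pi / 2) + 2 * pi * of_int m" l] th_le[of l "of_int 3 * (pi / 2) + 2 * pi * of_int m"]
        a T1 T3 unfolding y_def by auto
    then have "cos y \<ge> 0" by (rule cos_ge_zero)
    moreover have "cos (th l) = - cos y" unfolding y_def by (simp add: cos_diff)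
    ultimately have "R1 l = - sqrt (1 - R l ^ 6)" by (simp add: sqrt_R6 R1_def)
    then show "R (2 * l) = - (2 * R l * sqrt (1 - R l ^ 6) / sqrt (1 + 8 * R l ^ 6))"
      by (simp add: double)
  }
qed

end
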